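(* Let $H\in\mathbb C^{d\times d}$ be Hermitian with eigenvalues $\lambda_0\le\lambda_1\le\dots\le\lambda_{d-1}$ and corresponding orthonormal eigenvectors $\ket{\phi_0},\dots,\ket{\phi_{d-1}}$. Fix $j$ and let $\gamma_j:=\min\{|\lambda_j-\lambda_{j-1}|,|\lambda_j-\lambda_{j+1}|\}$ with $\lambda_{-1}:=-\infty$, $\lambda_d:=\infty$. Let $0<t\le\frac{1}{4\|H\|}$, $U=\exp(-iHt)$, and let $\widetilde U$ be a unitary with $\|\widetilde U-U\|\le\frac{t\epsilon}{9}\le\frac13$ for some $0\le\epsilon\le\gamma_j/2$. Let $\ket{\widetilde\phi_j}$ be an eigenvector of the effective Hamiltonian $\widetilde H=\frac it\log\widetilde U$ associated with its $j$-th smallest eigenvalue. Then $$|\langle\phi_j|\widetilde\phi_j\rangle|^2\ge 1-\frac{\pi^2\epsilon^2}{\gamma_j^2}.$$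
   Context: $\|\cdot\|$ is the spectral norm. For a matrix $M$ with $\|M-\mathbb 1\|<1$, $\log M:=\sum_{k=1}^\infty\frac{(-1)^{k+1}}{k}(M-\mathbb 1)^k$; under the stated hypotheses this series converges and $\widetilde H=\frac it\log\widetilde U$ is Hermitian, with eigenvalues ordered nondecreasingly and indexed from $0$. *)

theory Defs
  imports "HOL-Analysis.Analysis" "HOL-Library.Extended_Real"
begin

type_synonym 'n cmat = "complex ^ 'n ^ 'n"

definition cadj :: "'n::finite cmat \<Rightarrow> 'n cmat" where
  "cadj A = (\<chi> i j. cnj (A $ j $ i))"

definition hermitian :: "'n::finite cmat \<Rightarrow> bool" where
  "hermitian A \<longleftrightarrow> cadj A = A"

definition unitary :: "'n::finite cmat \<Rightarrow> bool" where
  "unitary U \<longleftrightarrow> U ** cadj U = mat 1 \<and> cadj U ** U = mat 1"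

definition snorm :: "'n::finite cmat \<Rightarrow> real" where
  "snorm A = onorm (\<lambda>x. A *v x)"

definition cscale :: "complex \<Rightarrow> 'n::finite cmat \<Rightarrow> 'n cmat" where
  "cscale c A = (\<chi> i j. c * A $ i $ j)"

fun matpow :: "'n::finite cmat \<Rightarrow> nat \<Rightarrow> 'n cmat" where
  "matpow A 0 = mat 1"
| "matpow A (Suc k) = A ** matpow A k"

definition mexp :: "'n::finite cmat \<Rightarrow> 'n cmat" where
  "mexp A = (\<Sum>k. (1 / fact k) *\<^sub>R matpow A k)"

definition mlog :: "'n::finite cmat \<Rightarrow> 'n cmat" where
  "mlog M = (\<Sum>k. ((-1) ^ k / real (Suc k)) *\<^sub>R matpow (M - mat 1) (Suc k))"

definition cinner :: "complex ^ 'n::finite \<Rightarrow> complex ^ 'n \<Rightarrow> complex" where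
  "cinner x y = (\<Sum>i\<in>UNIV. cnj (x $ i) * y $ i)"

definition ordered_eigensystem ::
  "'n::finite cmat \<Rightarrow> (nat \<Rightarrow> real) \<Rightarrow> (nat \<Rightarrow> complex ^ 'n) \<Rightarrow> bool" where
  "ordered_eigensystem A lam phi \<longleftrightarrow>
     (\<forall>k l. k \<le> l \<longrightarrow> l < CARD('n) \<longrightarrow> lam k \<le> lam l) \<and>
     (\<forall>k < CARD('n). A *v phi k = complex_of_real (lam k) *s phi k) \<and>
     (\<forall>k < CARD('n). \<forall>l < CARD('n). cinner (phi k) (phi l) = (if k = l then 1 else 0))"

definition spec_gap :: "(nat \<Rightarrow> real) \<Rightarrow> nat \<Rightarrow> nat \<Rightarrow> ereal" where
  "spec_gap lam d j =
     min (if j = 0 then \<infinity> else ereal \<bar>lam j - lam (j - 1)\<bar>)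
         (if j + 1 = d then \<infinity> else ereal \<bar>lam j - lam (j + 1)\<bar>)"

end

theory Submission
  imports Defs
begin

lemma cinner_sym: "cinner x y = cnj (cinner y x)"
  by (simp add: cinner_def mult.commute)

lemma cinner_scale_right: "cinner x (c *s y) = c * cinner x y"
  by (simp add: cinner_def sum_distrib_left algebra_simps)

lemma cinner_scale_left: "cinner (c *s x) y = cnj c * cinner x y"
  by (simp add: cinner_def sum_distrib_left algebra_simps)

lemma cinner_add_right: "cinner x (y + z) = cinner x y + cinner x z"
  by (simp add: cinner_def sum.distrib algebra_simps)

lemma cinner_diff_right: "cinner x (y - z) = cinner x y - cinner x z"
  by (simp add: cinner_def sum_subtractf algebra_simps)

lemma cinner_sum_right: "cinner x (sum f A) = (\<Sum>a\<in>A. cinner x (f a))"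
  by (induction A rule: infinite_finite_induct) (auto simp: cinner_def cinner_add_right sum.distrib algebra_simps)

lemma inner_Re_cinner: "inner x y = Re (cinner x y)"
  by (simp add: cinner_def inner_vec_def inner_complex_def Re_sum)

lemma cinner_self: "cinner x x = complex_of_real ((norm x)^2)"
proof -
  have "cinner x x = (\<Sum>i\<in>UNIV. complex_of_real ((cmod (x$i))^2))"
    unfolding cinner_def by (intro sum.cong refl) (simp only: complex_norm_square mult.commute)
  also have "\<dots> = complex_of_real ((norm x)^2)"
    by (simp add: norm_vec_def L2_set_def sum_nonneg flip: of_real_power of_real_sum)
  finally show ?thesis .
qed

lemma scaleR_vec_cs: "c *\<^sub>R (x :: complex^'n::finite) = complex_of_real c *s x"
  by (simp add: vec_eq_iff) (simp add: scaleR_conv_of_real)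

definition ONB :: "(nat \<Rightarrow> complex^'n::finite) \<Rightarrow> bool" where
  "ONB f \<longleftrightarrow> (\<forall>k<CARD('n). \<forall>l<CARD('n). cinner (f k) (f l) = (if k = l then 1 else 0))"

lemma ONB_coef:
  fixes f :: "nat \<Rightarrow> complex^'n::finite"
  assumes "ONB f" "l < CARD('n)"
  shows "cinner (f l) (\<Sum>k<CARD('n). b k *s f k) = b l"
proof -
  have "cinner (f l) (\<Sum>k<CARD('n). b k *s f k) = (\<Sum>k<CARD('n). b k * (if l = k then 1 else 0))"
    using assms unfolding ONB_def by (intro trans[OF cinner_sum_right] sum.cong) (auto simp: cinner_scale_right)
  also have "\<dots> = b l" using assms(2) by (simp add: if_distrib cong: if_cong)
  finally show ?thesis .
qed

lemma ONB_expand: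
  fixes f :: "nat \<Rightarrow> complex^'n::finite"
  assumes "ONB f"
  shows "x = (\<Sum>k<CARD('n). cinner (f k) x *s f k)"
proof -
  define d where "d = CARD('n)"
  define g where "g m = (if even m then f (m div 2) else \<i> *s f (m div 2))" for m
  have gi: "inner (g a) (g b) = (if a = b then 1 else 0)" if "a < 2*d" "b < 2*d" for a b
  proof -
    have a: "a div 2 < d" "b div 2 < d" using that by auto
    have *: "cinner (f (a div 2)) (f (b div 2)) = (if a div 2 = b div 2 then 1 else 0)"
      using assms a unfolding ONB_def d_def by auto
    show ?thesis
    proof (cases "even a"; cases "even b")
      assume "even a" "even b"
      moreover have "a = 2 * (a div 2)" "b = 2 * (b div 2)" using \<open>even a\<close> \<open>even b\<close> by simp_all
      ultimately have "a = b \<longleftrightarrow> a div 2 = b div 2" by metis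
      then show ?thesis using * \<open>even a\<close> \<open>even b\<close> unfolding inner_Re_cinner g_def by auto
    next
      assume "even a" "odd b"
      then have "a \<noteq> b" by auto
      then show ?thesis using * \<open>even a\<close> \<open>odd b\<close> unfolding inner_Re_cinner g_def by (auto simp: cinner_scale_right)
    next
      assume "odd a" "even b"
      then have "a \<noteq> b" by auto
      then show ?thesis using * \<open>odd a\<close> \<open>even b\<close> unfolding inner_Re_cinner g_def by (auto simp: cinner_scale_left)
    next
      assume "odd a" "odd b"
      moreover have "a = 2 * (a div 2) + 1" "b = 2 * (b div 2) + 1" using \<open>odd a\<close> \<open>odd b\<close> by presburger+
      ultimately have "a = b \<longleftrightarrow> a div 2 = b div 2" by metis
      then show ?thesis using * \<open>odd a\<close> \<open>odd b\<close> unfolding inner_Re_cinner g_def by (auto simp: cinner_scale_left cinner_scale_right)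
    qed
  qed
  define S where "S = g ` {..<2*d}"
  have inj: "inj_on g {..<2*d}"
  proof
    fix a b assume "a \<in> {..<2*d}" "b \<in> {..<2*d}" "g a = g b"
    then show "a = b" using gi[of a a] gi[of a b] by (auto split: if_splits)
  qed
  have cardS: "card S = 2*d" unfolding S_def using card_image[OF inj] by simp
  have orth: "pairwise orthogonal S"
    unfolding pairwise_def S_def orthogonal_def using gi by auto
  have n0: "0 \<notin> S" unfolding S_def using gi by force
  have ind: "independent S" by (rule pairwise_orthogonal_independent[OF orth n0])
  have "UNIV \<subseteq> span S"
    using card_eq_dim[of S UNIV] ind cardS unfolding S_def d_def by simp
  then have xs: "x \<in> span S" by auto
  let ?P = "\<lambda>x. x = (\<Sum>k<d. cinner (f k) x *s f k)"
  have "?P x" using xs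
  proof (induction rule: span_induct_alt)
    case base then show ?case by (simp add: cinner_def)
  next
    case (step c x y)
    have "?P x"
    proof -
      from step(1) obtain m where m: "m < 2*d" "x = g m" unfolding S_def by auto
      have md: "m div 2 < d" using m by auto
      have "(\<Sum>k<d. cinner (f k) x *s f k) = (\<Sum>k<d. (if k = m div 2 then (if even m then 1 else \<i>) else 0) *s f k)"
        using assms md unfolding ONB_def d_def m(2) g_def
        by (intro sum.cong) (auto simp: cinner_scale_right)
      also have "\<dots> = x" using md unfolding m(2) g_def
        by (simp add: if_distrib[of "\<lambda>c. c *s _"] cong: if_cong)
      finally show ?thesis by simp
    qed
    have "(\<Sum>k<d. cinner (f k) (c *\<^sub>R x + y) *s f k) = complex_of_real c *s (\<Sum>k<d. cinner (f k) x *s f k) + (\<Sum>k<d. cinner (f k) y *s f k)"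
      by (simp add: vec_eq_iff sum_component scaleR_vec_cs cinner_add_right cinner_scale_right sum.distrib sum_distrib_left algebra_simps)
    then show ?case using \<open>?P x\<close> step(2) by (simp add: scaleR_vec_cs)
  qed
  then show ?thesis unfolding d_def .
qed

lemma cnj_mult_self: "c * cnj c = complex_of_real ((cmod c)^2)"
  by (simp only: complex_norm_square)

lemma ONB_norm:
  fixes f :: "nat \<Rightarrow> complex^'n::finite"
  assumes "ONB f"
  shows "(norm x)^2 = (\<Sum>k<CARD('n). (cmod (cinner (f k) x))^2)"
proof -
  have "complex_of_real ((norm x)^2) = cinner x (\<Sum>k<CARD('n). cinner (f k) x *s f k)"
    using ONB_expand[OF assms, of x] cinner_self[of x] by simp
  also have "\<dots> = (\<Sum>k<CARD('n). complex_of_real ((cmod (cinner (f k) x))^2))"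
    unfolding cinner_sum_right cinner_scale_right
    by (intro sum.cong refl) (metis cinner_sym cnj_mult_self)
  also have "\<dots> = complex_of_real (\<Sum>k<CARD('n). (cmod (cinner (f k) x))^2)" by simp
  finally show ?thesis by (simp only: of_real_eq_iff)
qed

lemma ONB_norm_comb:
  fixes f :: "nat \<Rightarrow> complex^'n::finite"
  assumes "ONB f"
  shows "(norm (\<Sum>k<CARD('n). b k *s f k))^2 = (\<Sum>k<CARD('n). (cmod (b k))^2)"
  unfolding ONB_norm[OF assms] using ONB_coef[OF assms] by (intro sum.cong) auto

lemma mv_smult: "A *v (c *s x) = c *s (A *v (x::'a::comm_ring_1^'n::finite))"
  by (simp add: vec_eq_iff matrix_vector_mult_def sum_distrib_left algebra_simps)

lemma mv_sum: "A *v (\<Sum>k\<in>K. v k) = (\<Sum>k\<in>K. A *v (v k::'a::comm_ring_1^'n::finite))"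
  by (induction K rule: infinite_finite_induct) (auto simp: matrix_vector_right_distrib)

lemma ONB_apply:
  fixes f :: "nat \<Rightarrow> complex^'n::finite"
  assumes "ONB f" "\<forall>k<CARD('n). A *v f k = a k *s f k"
  shows "A *v x = (\<Sum>k<CARD('n). (a k * cinner (f k) x) *s f k)"
  apply (subst ONB_expand[OF assms(1), of x])
  using assms(2) by (simp add: mv_sum mv_smult mult.commute)

lemma ONB_quad:
  fixes f :: "nat \<Rightarrow> complex^'n::finite"
  assumes "ONB f" "\<forall>k<CARD('n). A *v f k = a k *s f k"
  shows "cinner x (A *v x) = (\<Sum>k<CARD('n). a k * complex_of_real ((cmod (cinner (f k) x))^2))"
  unfolding ONB_apply[OF assms] cinner_sum_right cinner_scale_right
  by (intro sum.cong refl) (metis cinner_sym cnj_mult_self mult.assoc)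

lemma OES_ONB: "ordered_eigensystem A la pa \<Longrightarrow> ONB pa"
  unfolding ordered_eigensystem_def ONB_def by blast

lemma orth_cinner0:
  assumes "inner x v = 0" "inner x (\<i> *s v) = 0"
  shows "cinner v x = 0"
proof -
  have "Re (cinner v x) = 0" using assms(1) unfolding inner_Re_cinner
    by (subst (asm) cinner_sym) simp
  moreover have "Im (cinner v x) = 0" using assms(2) unfolding inner_Re_cinner cinner_scale_right
    by (subst (asm) cinner_sym) simp
  ultimately show ?thesis by (simp add: complex_eq_iff)
qed

lemma OES_quad_Re:
  fixes A :: "'n::finite cmat"
  assumes "ordered_eigensystem A la pa"
  shows "Re (cinner x (A *v x)) = (\<Sum>k<CARD('n). la k * (cmod (cinner (pa k) x))^2)"
proof -
  have "cinner x (A *v x) = (\<Sum>k<CARD('n). complex_of_real (la k) * complex_of_real ((cmod (cinner (pa k) x))^2))"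
    apply (rule ONB_quad[OF OES_ONB[OF assms], where a="\<lambda>k. complex_of_real (la k)"])
    using assms by (simp add: ordered_eigensystem_def)
  then show ?thesis by (simp add: Re_sum)
qed

lemma weyl:
  fixes A B :: "'n::finite cmat"
  assumes oa: "ordered_eigensystem A la pa" and ob: "ordered_eigensystem B lb pb"
    and j: "j < CARD('n)" and E: "\<forall>x. norm (A *v x - B *v x) \<le> \<delta> * norm x"
  shows "lb j \<le> la j + \<delta>"
proof -
  define d where "d = CARD('n)"
  define Q where "Q = (pa ` {j<..<d} \<union> (\<lambda>l. \<i> *s pa l) ` {j<..<d}) \<union> (pb ` {..<j} \<union> (\<lambda>l. \<i> *s pb l) ` {..<j})"
  have fQ: "finite Q" unfolding Q_def by auto
  have "card Q \<le> (card {j<..<d} + card {j<..<d}) + (card {..<j} + card {..<j})"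
    unfolding Q_def
    by (intro order.trans[OF card_Un_le] add_mono order.trans[OF card_Un_le] card_image_le) auto
  also have "\<dots> < 2 * d" using j unfolding d_def by simp
  finally have dimQ: "dim Q < DIM(complex^'n)" using dim_le_card[of Q Q] fQ span_superset[of Q]
    unfolding d_def by simp
  then obtain x :: "complex^'n" where x0: "x \<noteq> 0" and xo: "\<And>y. y \<in> span Q \<Longrightarrow> orthogonal x y"
    using orthogonal_to_subspace_exists[OF dimQ] by blast
  have xQ: "inner x q = 0" if "q \<in> Q" for q
    using xo[OF span_base[OF that]] by (simp add: orthogonal_def)
  have ca: "cinner (pa l) x = 0" if "j < l" "l < d" for l
    by (rule orth_cinner0; rule xQ) (use that in \<open>auto simp: Q_def\<close>)
  have cb: "cinner (pb l) x = 0" if "l < j" for l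
    by (rule orth_cinner0; rule xQ) (use that in \<open>auto simp: Q_def\<close>)
  have la_mono: "la k \<le> la l" if "k \<le> l" "l < d" for k l
    using oa that unfolding ordered_eigensystem_def d_def by blast
  have lb_mono: "lb k \<le> lb l" if "k \<le> l" "l < d" for k l
    using ob that unfolding ordered_eigensystem_def d_def by blast
  have qa: "Re (cinner x (A *v x)) \<le> la j * (norm x)^2"
  proof -
    have "Re (cinner x (A *v x)) = (\<Sum>k<d. la k * (cmod (cinner (pa k) x))^2)"
      using OES_quad_Re[OF oa] unfolding d_def by simp
    also have "\<dots> \<le> (\<Sum>k<d. la j * (cmod (cinner (pa k) x))^2)"
    proof (intro sum_mono)
      fix k assume "k \<in> {..<d}"
      then show "la k * (cmod (cinner (pa k) x))^2 \<le> la j * (cmod (cinner (pa k) x))^2"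
        using ca[of k] la_mono[of k j] j unfolding d_def
        by (cases "k \<le> j") (auto intro: mult_right_mono)
    qed
    also have "\<dots> = la j * (norm x)^2"
      using ONB_norm[OF OES_ONB[OF oa], of x] unfolding d_def by (simp add: sum_distrib_left)
    finally show ?thesis .
  qed
  have qb: "lb j * (norm x)^2 \<le> Re (cinner x (B *v x))"
  proof -
    have "lb j * (norm x)^2 = (\<Sum>k<d. lb j * (cmod (cinner (pb k) x))^2)"
      using ONB_norm[OF OES_ONB[OF ob], of x] unfolding d_def by (simp add: sum_distrib_left)
    also have "\<dots> \<le> (\<Sum>k<d. lb k * (cmod (cinner (pb k) x))^2)"
    proof (intro sum_mono)
      fix k assume "k \<in> {..<d}"
      then show "lb j * (cmod (cinner (pb k) x))^2 \<le> lb k * (cmod (cinner (pb k) x))^2"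
        using cb[of k] lb_mono[of j k] j unfolding d_def
        by (cases "j \<le> k") (auto intro: mult_right_mono)
    qed
    also have "\<dots> = Re (cinner x (B *v x))"
      using OES_quad_Re[OF ob] unfolding d_def by simp
    finally show ?thesis .
  qed
  have "Re (cinner x (A *v x)) - Re (cinner x (B *v x)) = inner x (A *v x - B *v x)"
    by (simp add: inner_Re_cinner cinner_diff_right)
  also have "\<dots> \<ge> - (norm x * norm (A *v x - B *v x))"
    using Cauchy_Schwarz_ineq2[of x "A *v x - B *v x"] by linarith
  ultimately have "Re (cinner x (B *v x)) \<le> Re (cinner x (A *v x)) + norm x * (\<delta> * norm x)"
    using E mult_left_mono[of "norm (A *v x - B *v x)" "\<delta> * norm x" "norm x"] by force
  then have "lb j * (norm x)^2 \<le> (la j + \<delta>) * (norm x)^2"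
    using qa qb by (simp add: algebra_simps power2_eq_square)
  moreover have "(norm x)^2 > 0" using x0 by simp
  ultimately show ?thesis by simp
qed

lemma mv_scaleR_vec: "A *v (c *\<^sub>R x) = c *\<^sub>R (A *v (x::complex^'n::finite))"
  by (simp add: scaleR_vec_cs mv_smult)

lemma bl_mv: "bounded_linear (\<lambda>x. (M::'n::finite cmat) *v x)"
  unfolding linear_conv_bounded_linear[symmetric]
  by (intro linearI) (simp_all add: matrix_vector_right_distrib mv_scaleR_vec)

lemma snorm_bound: "norm (M *v x) \<le> snorm M * norm x"
  unfolding snorm_def by (rule onorm[OF bl_mv])

lemma snorm_nonneg: "0 \<le> snorm M"
  unfolding snorm_def by (rule onorm_pos_le[OF bl_mv])

lemma scaleR_mv: "(c *\<^sub>R M) *v x = c *\<^sub>R (M *v (x::complex^'n::finite))"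
  by (simp add: vec_eq_iff matrix_vector_mult_def scaleR_sum_right)

lemma bl_mv_left: "bounded_linear (\<lambda>M. (M::'n::finite cmat) *v x)"
  unfolding linear_conv_bounded_linear[symmetric]
  by (intro linearI) (simp_all add: matrix_vector_mult_add_rdistrib scaleR_mv)

lemma matpow_Suc_mv: "matpow A (Suc n) *v x = A *v (matpow A n *v x)"
  by (simp add: matrix_vector_mul_assoc)

lemma matpow_bound:
  assumes "\<forall>y. norm (A *v y) \<le> r * norm y" "0 \<le> r"
  shows "norm (matpow A n *v y) \<le> r^n * norm y"
proof (induction n)
  case 0 then show ?case by simp
next
  case (Suc n)
  have "norm (matpow A (Suc n) *v y) \<le> r * norm (matpow A n *v y)"
    unfolding matpow_Suc_mv using assms(1) by blast
  also have "\<dots> \<le> r * (r^n * norm y)" using Suc assms(2) by (rule mult_left_mono)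
  finally show ?case by simp
qed

lemma matpow_eig:
  assumes "A *v v = a *s v"
  shows "matpow A n *v v = (a^n) *s v"
  by (induction n) (auto simp del: matpow.simps simp add: matpow.simps(1) matpow_Suc_mv mv_smult assms vector_smult_assoc)

lemma norm_axis_c [simp]: "norm (axis m (1::complex)) = 1"
  by (simp add: inner_axis' norm_eq_1)

lemma mv_axis: "(M *v axis j 1) $ i = M $ i $ j"
  by (simp add: matrix_vector_mult_def axis_def if_distrib cong: if_cong)

lemma mat_norm_bound:
  fixes M :: "'n::finite cmat"
  assumes "\<forall>y. norm (M *v y) \<le> c * norm y"
  shows "norm M \<le> real (CARD('n))^2 * c"
proof -
  have ent: "cmod (M $ i $ j) \<le> c" for i j
  proof -
    have "cmod (M $ i $ j) \<le> norm (M *v axis j 1)"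
      using Finite_Cartesian_Product.norm_nth_le[of "M *v axis j 1" i] by (simp add: mv_axis)
    also have "\<dots> \<le> c" using assms[rule_format, of "axis j 1"] by simp
    finally show ?thesis .
  qed
  have "norm M \<le> (\<Sum>i\<in>UNIV. norm (M $ i))"
    unfolding norm_vec_def by (rule L2_set_le_sum) simp
  also have "\<dots> \<le> (\<Sum>i\<in>(UNIV::'n set). \<Sum>j\<in>(UNIV::'n set). cmod (M $ i $ j))"
    by (intro sum_mono) (unfold norm_vec_def, rule L2_set_le_sum, simp)
  also have "\<dots> \<le> (\<Sum>i\<in>(UNIV::'n set). \<Sum>j\<in>(UNIV::'n set). c)"
    by (intro sum_mono ent)
  also have "\<dots> = real (CARD('n))^2 * c" by (simp add: power2_eq_square)
  finally show ?thesis .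
qed

lemma mlog_apply:
  fixes M :: "'n::finite cmat"
  assumes "\<forall>y. norm ((M - mat 1) *v y) \<le> r * norm y" "0 \<le> r" "r < 1"
  shows "mlog M *v x = (\<Sum>m. ((-1)^m / real (Suc m)) *\<^sub>R (matpow (M - mat 1) (Suc m) *v x))"
    and "summable (\<lambda>m. ((-1)^m / real (Suc m)) *\<^sub>R (matpow (M - mat 1) (Suc m) *v x))"
proof -
  let ?f = "\<lambda>m. ((-1)^m / real (Suc m)) *\<^sub>R matpow (M - mat 1) (Suc m)"
  have b: "norm (?f m) \<le> real (CARD('n))^2 * r^(Suc m)" for m
  proof -
    have "norm (?f m) = (1 / real (Suc m)) * norm (matpow (M - mat 1) (Suc m))"
      by (simp add: abs_mult power_abs)
    also have "\<dots> \<le> 1 * norm (matpow (M - mat 1) (Suc m))"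
      by (intro mult_right_mono) auto
    also have "\<dots> \<le> real (CARD('n))^2 * r^(Suc m)"
      unfolding mult_1 by (rule mat_norm_bound) (use matpow_bound[OF assms(1,2)] in blast)
    finally show ?thesis .
  qed
  have "summable (\<lambda>m. real (CARD('n))^2 * r^(Suc m))"
    using assms(2,3) by (intro summable_mult summable_ignore_initial_segment[of _ 1]) simp
  then have sf: "summable ?f"
    by (rule summable_comparison_test'[where N=0]) (use b in auto)
  have "mlog M *v x = (\<Sum>m. ?f m *v x)"
    unfolding mlog_def by (rule bounded_linear.suminf[OF bl_mv_left sf])
  then show "mlog M *v x = (\<Sum>m. ((-1)^m / real (Suc m)) *\<^sub>R (matpow (M - mat 1) (Suc m) *v x))"
    by (simp add: scaleR_mv)
  show "summable (\<lambda>m. ((-1)^m / real (Suc m)) *\<^sub>R (matpow (M - mat 1) (Suc m) *v x))"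
    using bounded_linear.summable[OF bl_mv_left sf, of x] by (simp add: scaleR_mv)
qed

lemma mexp_apply:
  fixes X :: "'n::finite cmat"
  assumes "\<forall>y. norm (X *v y) \<le> s * norm y" "0 \<le> s"
  shows "mexp X *v x = (\<Sum>m. (1 / fact m) *\<^sub>R (matpow X m *v x))"
proof -
  let ?f = "\<lambda>m. (1 / fact m) *\<^sub>R matpow X m"
  have b: "norm (?f m) \<le> real (CARD('n))^2 * (inverse (fact m) * s^m)" for m
  proof -
    have "norm (?f m) = inverse (fact m) * norm (matpow X m)"
      by (simp add: field_simps)
    also have "\<dots> \<le> inverse (fact m) * (real (CARD('n))^2 * s^m)"
      by (intro mult_left_mono mat_norm_bound) (use matpow_bound[OF assms(1,2)] in auto)
    finally show ?thesis by (simp add: algebra_simps)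
  qed
  have "summable (\<lambda>m. real (CARD('n))^2 * (inverse (fact m) * s^m))"
    by (intro summable_mult summable_exp)
  then have sf: "summable ?f"
    by (rule summable_comparison_test'[where N=0]) (use b in auto)
  have "mexp X *v x = (\<Sum>m. ?f m *v x)"
    unfolding mexp_def by (rule bounded_linear.suminf[OF bl_mv_left sf])
  then show ?thesis by (simp add: scaleR_mv)
qed

lemma mv_diff_right: "A *v (a - b) = A *v a - A *v (b::'a::comm_ring_1^'n::finite)"
  by (simp add: vec_eq_iff matrix_vector_mult_def sum_subtractf algebra_simps)

lemma matpow_diff:
  assumes A: "\<forall>y. norm (A *v y) \<le> r * norm y" and B: "\<forall>y. norm (B *v y) \<le> r * norm y"
    and D: "\<forall>y. norm (A *v y - B *v y) \<le> \<eta> * norm y" and r: "0 \<le> r" and e: "0 \<le> \<eta>"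
  shows "norm (matpow A n *v y - matpow B n *v y) \<le> real n * r^(n-1) * \<eta> * norm y"
proof (induction n)
  case 0 then show ?case by simp
next
  case (Suc n)
  let ?a = "matpow A n *v y" and ?b = "matpow B n *v y"
  have eq: "matpow A (Suc n) *v y - matpow B (Suc n) *v y = A *v (?a - ?b) + (A *v ?b - B *v ?b)"
    unfolding matpow_Suc_mv mv_diff_right by simp
  have "norm (matpow A (Suc n) *v y - matpow B (Suc n) *v y) \<le> norm (A *v (?a - ?b)) + norm (A *v ?b - B *v ?b)"
    unfolding eq by (rule norm_triangle_ineq)
  also have "\<dots> \<le> r * (real n * r^(n-1) * \<eta> * norm y) + \<eta> * (r^n * norm y)"
  proof (rule add_mono)
    show "norm (A *v (?a - ?b)) \<le> r * (real n * r^(n-1) * \<eta> * norm y)"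
      using A[rule_format, of "?a - ?b"] mult_left_mono[OF Suc r] by linarith
    show "norm (A *v ?b - B *v ?b) \<le> \<eta> * (r^n * norm y)"
      using D[rule_format, of ?b] mult_left_mono[OF matpow_bound[OF B r, of n y] e] by linarith
  qed
  also have "\<dots> = real (Suc n) * r^(Suc n - 1) * \<eta> * norm y"
    by (cases n) (simp_all add: algebra_simps)
  finally show ?case .
qed

lemma mlog_diff:
  fixes M N :: "'n::finite cmat"
  assumes M: "\<forall>y. norm ((M - mat 1) *v y) \<le> r * norm y" and N: "\<forall>y. norm ((N - mat 1) *v y) \<le> r * norm y"
    and r: "0 \<le> r" "r < 1" and D: "\<forall>y. norm (M *v y - N *v y) \<le> \<eta> * norm y" and e: "0 \<le> \<eta>"
  shows "norm (mlog M *v x - mlog N *v x) \<le> \<eta> / (1 - r) * norm x"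
proof -
  let ?c = "\<lambda>m::nat. ((-1::real)^m / real (Suc m))"
  let ?P = "\<lambda>m. matpow (M - mat 1) (Suc m) *v x" and ?Q = "\<lambda>m. matpow (N - mat 1) (Suc m) *v x"
  have D': "\<forall>y. norm ((M - mat 1) *v y - (N - mat 1) *v y) \<le> \<eta> * norm y"
    using D by (simp add: matrix_vector_mult_diff_rdistrib)
  have "mlog M *v x - mlog N *v x = (\<Sum>m. ?c m *\<^sub>R ?P m) - (\<Sum>m. ?c m *\<^sub>R ?Q m)"
    using mlog_apply(1)[OF M r] mlog_apply(1)[OF N r] by simp
  also have "\<dots> = (\<Sum>m. ?c m *\<^sub>R ?P m - ?c m *\<^sub>R ?Q m)"
    by (rule suminf_diff[OF mlog_apply(2)[OF M r] mlog_apply(2)[OF N r]])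
  finally have eq: "mlog M *v x - mlog N *v x = (\<Sum>m. ?c m *\<^sub>R (?P m - ?Q m))"
    by (simp add: scaleR_diff_right)
  have tb: "norm (?c m *\<^sub>R (?P m - ?Q m)) \<le> r^m * (\<eta> * norm x)" for m
  proof -
    have "norm (?c m *\<^sub>R (?P m - ?Q m)) = (1 / real (Suc m)) * norm (?P m - ?Q m)"
      by (simp add: abs_mult power_abs)
    also have "\<dots> \<le> (1 / real (Suc m)) * (real (Suc m) * r^(Suc m - 1) * \<eta> * norm x)"
      by (intro mult_left_mono matpow_diff[OF M N D' r(1) e]) auto
    also have "\<dots> = r^m * (\<eta> * norm x)" by simp
    finally show ?thesis .
  qed
  have sg: "summable (\<lambda>m. r^m * (\<eta> * norm x))"
    using r by (intro summable_mult2) simp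
  have "norm (mlog M *v x - mlog N *v x) \<le> (\<Sum>m. r^m * (\<eta> * norm x))"
    unfolding eq by (rule norm_suminf_le[OF tb sg])
  also have "\<dots> = (\<Sum>m. r^m) * (\<eta> * norm x)" by (rule suminf_mult2[symmetric]) (use r in simp)
  also have "\<dots> = \<eta> / (1 - r) * norm x" using r by (simp add: suminf_geometric)
  finally show ?thesis .
qed

lemma cscale_mv: "cscale c A *v x = c *s (A *v x)"
  by (simp add: vec_eq_iff matrix_vector_mult_def cscale_def sum_distrib_left algebra_simps)

lemma norm_smult_c: "norm (c *s (x::complex^'n::finite)) = cmod c * norm x"
  unfolding norm_vec_def by (simp add: norm_mult L2_set_right_distrib)

lemma bl_smult_left: "bounded_linear (\<lambda>c::complex. c *s (v::complex^'n::finite))"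
  unfolding linear_conv_bounded_linear[symmetric]
  by (intro linearI) (simp_all add: vector_sadd_rdistrib vec_eq_iff)

lemma ONB_norm1: "ONB f \<Longrightarrow> k < CARD('n) \<Longrightarrow> norm (f k :: complex^'n::finite) = 1"
proof -
  assume a: "ONB f" "k < CARD('n)"
  then have "complex_of_real ((norm (f k))^2) = 1" using cinner_self[of "f k"] unfolding ONB_def by simp
  then have "(norm (f k))^2 = 1" using of_real_eq_1_iff by blast
  then show ?thesis using norm_ge_zero[of "f k"] by (simp add: power2_eq_1_iff)
qed

lemma U_facts:
  fixes H :: "'n::finite cmat"
  assumes oes: "ordered_eigensystem H lam phi" and t: "0 < t" and tH: "t * (4 * snorm H) \<le> 1"
  defines "X \<equiv> cscale (- \<i> * complex_of_real t) H"
  shows "\<forall>y. norm ((mexp X - mat 1) *v y) \<le> 1/4 * norm y"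
    and "\<forall>y. mlog (mexp X) *v y = X *v y"
proof -
  define d where "d = CARD('n)"
  have onb: "ONB phi" by (rule OES_ONB[OF oes])
  have eig: "H *v phi k = complex_of_real (lam k) *s phi k" if "k < d" for k
    using oes that unfolding ordered_eigensystem_def d_def by blast
  have lamb: "t * \<bar>lam k\<bar> \<le> 1/4" if "k < d" for k
  proof -
    have "\<bar>lam k\<bar> = norm (H *v phi k)"
      using eig[OF that] ONB_norm1[OF onb, of k] that unfolding d_def by (simp add: norm_smult_c)
    also have "\<dots> \<le> snorm H" using snorm_bound[of H "phi k"] ONB_norm1[OF onb, of k] that unfolding d_def by simp
    finally have "\<bar>lam k\<bar> \<le> snorm H" .
    then have "t * \<bar>lam k\<bar> \<le> t * snorm H" using t by (intro mult_left_mono) auto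
    then show ?thesis using tH by linarith
  qed
  define z where "z k = - \<i> * complex_of_real (t * lam k)" for k
  have Xeig: "X *v phi k = z k *s phi k" if "k < d" for k
    unfolding X_def cscale_mv eig[OF that] z_def by (simp add: vector_smult_assoc)
  have Xb: "\<forall>y. norm (X *v y) \<le> 1/4 * norm y"
  proof
    fix y
    have "norm (X *v y) = t * norm (H *v y)" unfolding X_def cscale_mv norm_smult_c using t
      by (simp add: norm_mult)
    also have "\<dots> \<le> t * (snorm H * norm y)" using t snorm_bound[of H y] by simp
    also have "\<dots> = (t * snorm H) * norm y" by simp
    also have "\<dots> \<le> 1/4 * norm y" using tH t by (intro mult_right_mono) auto
    finally show "norm (X *v y) \<le> 1/4 * norm y" .
  qed
  have Ueig: "mexp X *v phi k = exp (z k) *s phi k" if "k < d" for k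
  proof -
    have "mexp X *v phi k = (\<Sum>m. (1 / fact m) *\<^sub>R (matpow X m *v phi k))"
      by (rule mexp_apply[OF Xb]) simp
    also have "\<dots> = (\<Sum>m. (z k ^ m /\<^sub>R fact m) *s phi k)"
      unfolding matpow_eig[OF Xeig[OF that]] by (intro arg_cong[where f=suminf] ext) (simp add: vec_eq_iff, simp add: scaleR_conv_of_real divide_inverse)
    also have "\<dots> = exp (z k) *s phi k"
      using bounded_linear.suminf[OF bl_smult_left, of "\<lambda>m. z k ^ m /\<^sub>R fact m" "phi k"]
        exp_converges[of "z k"] by (simp add: sums_iff)
    finally show ?thesis .
  qed
  define w where "w k = exp (z k) - 1" for k
  have Beig: "(mexp X - mat 1) *v phi k = w k *s phi k" if "k < d" for k
    unfolding matrix_vector_mult_diff_rdistrib Ueig[OF that] w_def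
    by (simp add: vec_eq_iff algebra_simps)
  have wb: "cmod (w k) \<le> 1/4" if "k < d" for k
  proof -
    have zk: "z k = \<i> * complex_of_real (- (t * lam k))" unfolding z_def by simp
    have "cmod (w k) = 2 * \<bar>sin (- (t * lam k) / 2)\<bar>" unfolding w_def zk by (rule dist_exp_i_1)
    also have "\<dots> \<le> 2 * \<bar>- (t * lam k) / 2\<bar>" using abs_sin_x_le_abs_x[of "- (t * lam k) / 2"] by linarith
    also have "\<dots> = t * \<bar>lam k\<bar>" using t by (simp add: abs_mult)
    finally show ?thesis using lamb[OF that] by simp
  qed
  show Bb: "\<forall>y. norm ((mexp X - mat 1) *v y) \<le> 1/4 * norm y"
  proof
    fix y
    have "(mexp X - mat 1) *v y = (\<Sum>k<CARD('n). (w k * cinner (phi k) y) *s phi k)"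
      by (rule ONB_apply[OF onb]) (use Beig in \<open>auto simp: d_def\<close>)
    then have "(norm ((mexp X - mat 1) *v y))^2 = (\<Sum>k<d. (cmod (w k * cinner (phi k) y))^2)"
      unfolding d_def using ONB_norm_comb[OF onb] by simp
    also have "\<dots> \<le> (\<Sum>k<d. (1/4)^2 * (cmod (cinner (phi k) y))^2)"
      using wb by (intro sum_mono) (auto simp: norm_mult power_mult_distrib intro!: mult_right_mono power_mono)
    also have "\<dots> = (1/4)^2 * (norm y)^2"
      unfolding ONB_norm[OF onb, of y] d_def by (simp only: sum_distrib_left)
    also have "\<dots> = (1/4 * norm y)^2" by (simp only: power_mult_distrib)
    finally show "norm ((mexp X - mat 1) *v y) \<le> 1/4 * norm y"
      by (rule power2_le_imp_le) simp
  qed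
  have Leig: "mlog (mexp X) *v phi k = z k *s phi k" if "k < d" for k
  proof -
    have wl: "cmod (w k) < 1" using wb[OF that] by simp
    have s1: "(\<lambda>n. (-1)^Suc n / of_nat n * w k ^ n) sums ln (1 + w k)" by (rule Ln_series[OF wl])
    have s2: "(\<lambda>m. complex_of_real ((-1)^m / real (Suc m)) * w k ^ Suc m) sums ln (1 + w k)"
    proof -
      let ?f = "\<lambda>n. (-1)^Suc n / of_nat n * w k ^ n"
      have "(\<lambda>n. ?f (Suc n)) sums ln (1 + w k)"
        using sums_Suc_iff[of ?f "ln (1 + w k)"] s1 by simp
      moreover have "?f (Suc m) = complex_of_real ((-1)^m / real (Suc m)) * w k ^ Suc m" for m
        by simp
      ultimately show ?thesis by simp
    qed
    have "\<bar>t * lam k\<bar> \<le> 1/4" using lamb[OF that] t by (simp add: abs_mult)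
    then have Im: "- pi < Im (z k)" "Im (z k) \<le> pi" using pi_gt3 unfolding z_def by (auto simp: abs_le_iff)
    have ln: "ln (1 + w k) = z k" unfolding w_def using Im by simp
    have "mlog (mexp X) *v phi k = (\<Sum>m. ((-1)^m / real (Suc m)) *\<^sub>R (matpow (mexp X - mat 1) (Suc m) *v phi k))"
      by (rule mlog_apply(1)[OF Bb]) simp_all
    also have "\<dots> = (\<Sum>m. (complex_of_real ((-1)^m / real (Suc m)) * w k ^ Suc m) *s phi k)"
      unfolding matpow_eig[OF Beig[OF that]] by (intro arg_cong[where f=suminf] ext) (simp add: vec_eq_iff, simp add: scaleR_conv_of_real)
    also have "\<dots> = z k *s phi k"
      using bounded_linear.suminf[OF bl_smult_left, of "\<lambda>m. complex_of_real ((-1)^m / real (Suc m)) * w k ^ Suc m" "phi k"]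
        s2 ln by (simp add: sums_iff)
    finally show ?thesis .
  qed
  show "\<forall>y. mlog (mexp X) *v y = X *v y"
  proof
    fix y
    show "mlog (mexp X) *v y = X *v y"
    proof -
      have "mlog (mexp X) *v y = (\<Sum>k<CARD('n). (z k * cinner (phi k) y) *s phi k)"
        by (rule ONB_apply[OF onb]) (use Leig in \<open>auto simp: d_def\<close>)
      moreover have "X *v y = (\<Sum>k<CARD('n). (z k * cinner (phi k) y) *s phi k)"
        by (rule ONB_apply[OF onb]) (use Xeig in \<open>auto simp: d_def\<close>)
      ultimately show ?thesis by simp
    qed
  qed
qed

lemma smult_sum_c: "c *s (\<Sum>k\<in>K. v k) = (\<Sum>k\<in>K. c *s (v k :: complex^'n::finite))"
  by (simp add: vec_eq_iff sum_component sum_distrib_left)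

theorem proposition2:
  fixes H Ut :: "'n::finite cmat"
    and lam mu :: "nat \<Rightarrow> real"
    and phi psi :: "nat \<Rightarrow> complex ^ 'n"
    and phit :: "complex ^ 'n"
    and t \<epsilon> :: real and j :: nat
  assumes "hermitian H"
    and "ordered_eigensystem H lam phi"
    and "j < CARD('n)"
    and "spec_gap lam CARD('n) j > 0"
    and "0 < t" and "t * (4 * snorm H) \<le> 1"
    and "unitary Ut"
    and "snorm (Ut - mexp (cscale (- \<i> * complex_of_real t) H)) \<le> t * \<epsilon> / 9"
    and "t * \<epsilon> / 9 \<le> 1 / 3"
    and "0 \<le> \<epsilon>" and "ereal \<epsilon> \<le> spec_gap lam CARD('n) j / 2"
    and "ordered_eigensystem (cscale (\<i> / complex_of_real t) (mlog Ut)) mu psi"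
    and "cscale (\<i> / complex_of_real t) (mlog Ut) *v phit = complex_of_real (mu j) *s phit"
    and "norm phit = 1"
  shows "ereal ((cmod (cinner (phi j) phit))\<^sup>2)
           \<ge> 1 - ereal ((pi * \<epsilon>)\<^sup>2) / (spec_gap lam CARD('n) j)\<^sup>2"
proof -
  note oes = assms(2) and j = assms(3) and gap0 = assms(4) and t = assms(5) and tH = assms(6)
    and sn = assms(8) and eta13 = assms(9) and e0 = assms(10) and eg = assms(11)
    and oesT = assms(12) and phit_eig = assms(13) and phit1 = assms(14)
  define d where "d = CARD('n)"
  define X where "X = cscale (- \<i> * complex_of_real t) H"
  define U where "U = mexp X"
  define Ht where "Ht = cscale (\<i> / complex_of_real t) (mlog Ut)"
  define \<eta> where "\<eta> = t * \<epsilon> / 9"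
  define \<delta> where "\<delta> = 4 * \<epsilon> / 15"
  have Bb: "\<forall>y. norm ((U - mat 1) *v y) \<le> 1/4 * norm y"
    using U_facts(1)[OF oes t tH] unfolding U_def X_def .
  have LU: "\<forall>y. mlog U *v y = X *v y"
    using U_facts(2)[OF oes t tH] unfolding U_def X_def .
  have eta0: "0 \<le> \<eta>" unfolding \<eta>_def using t e0 by simp
  have D: "\<forall>y. norm (Ut *v y - U *v y) \<le> \<eta> * norm y"
  proof
    fix y
    have "norm (Ut *v y - U *v y) = norm ((Ut - U) *v y)" by (simp add: matrix_vector_mult_diff_rdistrib)
    also have "\<dots> \<le> snorm (Ut - U) * norm y" by (rule snorm_bound)
    also have "\<dots> \<le> \<eta> * norm y" using sn unfolding \<eta>_def U_def X_def by (intro mult_right_mono) auto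
    finally show "norm (Ut *v y - U *v y) \<le> \<eta> * norm y" .
  qed
  have Ab: "\<forall>y. norm ((Ut - mat 1) *v y) \<le> 7/12 * norm y"
  proof
    fix y
    have "(Ut - mat 1) *v y = (Ut *v y - U *v y) + (U - mat 1) *v y"
      by (simp add: matrix_vector_mult_diff_rdistrib)
    then have "norm ((Ut - mat 1) *v y) \<le> norm (Ut *v y - U *v y) + norm ((U - mat 1) *v y)"
      by (simp add: norm_triangle_ineq)
    also have "\<dots> \<le> \<eta> * norm y + 1/4 * norm y"
      using D Bb by (intro add_mono) auto
    also have "\<dots> = (\<eta> + 1/4) * norm y" by (simp add: algebra_simps)
    also have "\<dots> \<le> 7/12 * norm y" using eta13 unfolding \<eta>_def[symmetric]
      by (intro mult_right_mono) auto
    finally show "norm ((Ut - mat 1) *v y) \<le> 7/12 * norm y" .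
  qed
  have Bb': "\<forall>y. norm ((U - mat 1) *v y) \<le> 7/12 * norm y"
  proof
    fix y
    have "norm ((U - mat 1) *v y) \<le> 1/4 * norm y" using Bb by blast
    also have "\<dots> \<le> 7/12 * norm y" by (intro mult_right_mono) auto
    finally show "norm ((U - mat 1) *v y) \<le> 7/12 * norm y" .
  qed
  have Ld: "norm (mlog Ut *v y - mlog U *v y) \<le> \<eta> / (1 - 7/12) * norm y" for y
    by (rule mlog_diff[OF Ab Bb' _ _ D eta0]) simp_all
  have E: "\<forall>y. norm (Ht *v y - H *v y) \<le> \<delta> * norm y"
  proof
    fix y
    have Hy: "H *v y = (\<i> / complex_of_real t) *s (mlog U *v y)"
      using t unfolding LU[rule_format] X_def cscale_mv by (simp add: vector_smult_assoc)
    have "Ht *v y - H *v y = (\<i> / complex_of_real t) *s (mlog Ut *v y - mlog U *v y)"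
      unfolding Hy Ht_def cscale_mv by (simp add: vec_eq_iff algebra_simps)
    moreover have "cmod (\<i> / complex_of_real t) = 1 / t" using t by (simp add: norm_divide)
    ultimately have "norm (Ht *v y - H *v y) = (1 / t) * norm (mlog Ut *v y - mlog U *v y)"
      by (simp only: norm_smult_c)
    also have "\<dots> \<le> (1 / t) * (\<eta> / (1 - 7/12) * norm y)" using Ld t by (intro mult_left_mono) auto
    also have "\<dots> = \<delta> * norm y" unfolding \<eta>_def \<delta>_def using t by (simp add: field_simps)
    finally show "norm (Ht *v y - H *v y) \<le> \<delta> * norm y" .
  qed
  have E': "\<forall>y. norm (H *v y - Ht *v y) \<le> \<delta> * norm y"
    using E by (simp add: norm_minus_commute)
  have w1: "lam j \<le> mu j + \<delta>" by (rule weyl[OF oesT[folded Ht_def] oes j E])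
  have w2: "mu j \<le> lam j + \<delta>" by (rule weyl[OF oes oesT[folded Ht_def] j E'])
  define c where "c k = cinner (phi k) phit" for k
  have onb: "ONB phi" by (rule OES_ONB[OF oes])
  have csum: "(\<Sum>k<d. (cmod (c k))^2) = 1"
    using ONB_norm[OF onb, of phit] phit1 unfolding c_def d_def by simp
  have Hphit: "H *v phit = (\<Sum>k<d. (complex_of_real (lam k) * c k) *s phi k)"
    unfolding c_def d_def by (rule ONB_apply[OF onb]) (use oes in \<open>simp add: ordered_eigensystem_def\<close>)
  have Htphit: "Ht *v phit = (\<Sum>k<d. (complex_of_real (mu j) * c k) *s phi k)"
    unfolding Ht_def phit_eig c_def d_def
    by (subst ONB_expand[OF onb, of phit]) (simp add: smult_sum_c vector_smult_assoc)
  have diff: "H *v phit - Ht *v phit = (\<Sum>k<d. ((complex_of_real (lam k - mu j)) * c k) *s phi k)"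
    unfolding Hphit Htphit by (simp add: vec_eq_iff sum_component sum_subtractf algebra_simps)
  have nd: "(\<Sum>k<d. (lam k - mu j)^2 * (cmod (c k))^2) \<le> \<delta>^2"
  proof -
    have "(\<Sum>k<d. (lam k - mu j)^2 * (cmod (c k))^2) = (norm (H *v phit - Ht *v phit))^2"
    proof -
      have cd: "cmod (complex_of_real a - complex_of_real b) = \<bar>a - b\<bar>" for a b
        by (simp only: of_real_diff[symmetric] norm_of_real)
      show ?thesis unfolding diff d_def ONB_norm_comb[OF onb] by (simp add: norm_mult power_mult_distrib cd)
    qed
    also have "\<dots> \<le> (\<delta> * norm phit)^2"
      using E'[rule_format, of phit] by (intro power_mono) auto
    finally show ?thesis using phit1 by simp
  qed
  show ?thesis
  proof (cases "spec_gap lam d j = \<infinity>")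
    case True
    then have "j = 0" "j + 1 = d" unfolding spec_gap_def by (auto split: if_splits simp: min_def)
    then have "d = 1" by simp
    then have "(cmod (c j))^2 = 1" using csum \<open>j = 0\<close> by simp
    then show ?thesis using True unfolding c_def d_def by simp
  next
    case False
    have notm: "spec_gap lam d j \<noteq> - \<infinity>" unfolding spec_gap_def by (auto simp: min_def)
    then obtain \<gamma> where g: "spec_gap lam d j = ereal \<gamma>" using False by (cases "spec_gap lam d j") auto
    have g0: "0 < \<gamma>" using gap0 g unfolding d_def by simp
    have eg': "\<epsilon> \<le> \<gamma> / 2" using eg g unfolding d_def by simp
    have mono: "lam k \<le> lam l" if "k \<le> l" "l < d" for k l
      using oes that unfolding ordered_eigensystem_def d_def by blast
    have gapk: "\<gamma> \<le> \<bar>lam k - lam j\<bar>" if "k < d" "k \<noteq> j" for k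
    proof (cases "k < j")
      case True
      then have "j \<noteq> 0" by simp
      then have "ereal \<gamma> \<le> ereal \<bar>lam j - lam (j - 1)\<bar>" using g unfolding spec_gap_def by (simp add: min_def split: if_splits)
      moreover have "lam k \<le> lam (j - 1)" "lam (j - 1) \<le> lam j" using True j unfolding d_def by (auto intro!: mono simp: d_def)
      ultimately show ?thesis by simp
    next
      case False
      then have jk: "j + 1 \<le> k" using that by simp
      then have "j + 1 \<noteq> d" using that by simp
      then have "ereal \<gamma> \<le> ereal \<bar>lam j - lam (j + 1)\<bar>" using g unfolding spec_gap_def by (simp add: min_def split: if_splits)
      moreover have "lam (j + 1) \<le> lam k" "lam j \<le> lam (j + 1)" using jk that by (auto intro!: mono)
      ultimately show ?thesis by simp
    qed
    define gg where "gg = 13 * \<gamma> / 15"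
    have dl: "\<delta> \<le> 2 * \<gamma> / 15" unfolding \<delta>_def using eg' by simp
    have gk: "gg^2 * (cmod (c k))^2 \<le> (lam k - mu j)^2 * (cmod (c k))^2" if "k < d" "k \<noteq> j" for k
    proof -
      have "gg \<le> \<bar>lam k - mu j\<bar>" using gapk[OF that] w1 w2 dl unfolding gg_def by linarith
      moreover have "0 \<le> gg" using g0 unfolding gg_def by simp
      ultimately have "gg^2 \<le> \<bar>lam k - mu j\<bar>^2" by (intro power_mono)
      then have "gg^2 \<le> (lam k - mu j)^2" by simp
      then show ?thesis by (rule mult_right_mono) simp
    qed
    have "gg^2 * (1 - (cmod (c j))^2) = gg^2 * (\<Sum>k\<in>{..<d} - {j}. (cmod (c k))^2)"
      using csum sum.remove[of "{..<d}" j "\<lambda>k. (cmod (c k))^2"] j unfolding d_def by simp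
    also have "\<dots> = (\<Sum>k\<in>{..<d} - {j}. gg^2 * (cmod (c k))^2)" by (simp add: sum_distrib_left)
    also have "\<dots> \<le> (\<Sum>k\<in>{..<d} - {j}. (lam k - mu j)^2 * (cmod (c k))^2)"
      by (intro sum_mono gk) auto
    also have "\<dots> \<le> (\<Sum>k<d. (lam k - mu j)^2 * (cmod (c k))^2)"
      by (intro sum_mono2) auto
    also have "\<dots> \<le> \<delta>^2" by (rule nd)
    finally have key: "gg^2 * (1 - (cmod (c j))^2) \<le> \<delta>^2" .
    have gg0: "0 < gg" unfolding gg_def using g0 by simp
    have "1 - (cmod (c j))^2 \<le> \<delta>^2 / gg^2" using key gg0 by (simp add: field_simps mult.commute)
    also have "\<dots> = (4 * \<epsilon> / (13 * \<gamma>))^2" unfolding \<delta>_def gg_def using g0 by (simp add: field_simps)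
    also have "\<dots> \<le> (pi * \<epsilon> / \<gamma>)^2"
    proof (intro power_mono)
      have "3 * (\<epsilon> * 13) \<le> pi * (\<epsilon> * 13)" using pi_gt3 e0 by (intro mult_right_mono) auto
      then show "4 * \<epsilon> / (13 * \<gamma>) \<le> pi * \<epsilon> / \<gamma>" using g0 e0 by (simp add: field_simps)
      show "0 \<le> 4 * \<epsilon> / (13 * \<gamma>)" using g0 e0 by simp
    qed
    finally have fin: "1 - (pi * \<epsilon>)^2 / \<gamma>^2 \<le> (cmod (c j))^2" by (simp add: power_divide)
    have "1 - ereal ((pi * \<epsilon>)^2) / (ereal \<gamma>)^2 = ereal (1 - (pi * \<epsilon>)^2 / \<gamma>^2)"
      using g0 by (simp add: power2_eq_square, simp add: one_ereal_def)
    then show ?thesis using fin g unfolding c_def d_def by simp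
  qed
qed

end
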